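(* Let $\gamma,\delta>0$, let $x=(x_{ij}),y=(y_{ij})\in MS(2,\mathbb{R})$ (so $x_{21}=x_{12}$, $y_{21}=y_{12}$) with $y$ positive definite, $D:=y_{11}y_{22}-y_{12}^2$, and $p=(p_1,p_2)$, $q=(q_1,q_2)\in\mathbb{R}^2$. Let $F=(f_{ij})_{i,j=1}^5$ be the real symmetric matrix ($f_{ji}=f_{ij}$) with $f_{11}=\frac{\gamma}{D}y_{22}+\delta p_1^2$, $f_{12}=-\frac{\gamma}{D}y_{12}+\delta p_1p_2$, $f_{13}=\frac{\gamma}{D}(y_{22}x_{11}-y_{12}x_{12})-\delta q_1p_1$, $f_{14}=\frac{\gamma}{D}(y_{22}x_{12}-y_{12}x_{22})-\delta q_1p_2$, $f_{15}=-\delta p_1$, $f_{22}=\frac{\gamma}{D}y_{11}+\delta p_2^2$, $f_{23}=\frac{\gamma}{D}(-y_{12}x_{11}+y_{11}x_{12})-\delta q_2p_1$, $f_{24}=\frac{\gamma}{D}(-y_{12}x_{12}+y_{11}x_{22})-\delta q_2p_2$, $f_{25}=-\delta p_2$, $f_{33}=\frac{\gamma}{D}[(x_{11}^2+y_{11}^2)y_{22}+(x_{12}^2-y_{12}^2)y_{11}-2x_{11}x_{12}y_{12}]+\delta q_1^2$, $f_{34}=\frac{\gamma}{D}[(-x_{12}^2-x_{11}x_{22}+y_{11}y_{22}-y_{12}^2)y_{12}+x_{11}x_{12}y_{22}+x_{12}x_{22}y_{11}]+\delta q_1q_2$, $f_{35}=\delta q_1$, $f_{44}=\frac{\gamma}{D}[(x_{12}^2-y_{12}^2)y_{22}+(x_{22}^2+y_{22}^2)y_{11}-2x_{12}x_{22}y_{12}]+\delta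 q_2^2$, $f_{45}=\delta q_2$, $f_{55}=\delta$. Put $I_2:=p_2q_1-p_1q_2$, $A:=2[(x_{11}-x_{22})y_{12}-x_{12}(y_{11}-y_{22})]$ and $B:=4x_{12}^2+(x_{11}-x_{22})^2+y_{11}^2+y_{22}^2+2y_{12}^2$. Then $$ \det F=\delta\Big[\gamma^4-\gamma^3\frac{\delta I_2}{D}A-\gamma^2\frac{(\delta I_2)^2}{D}B-\gamma\frac{(\delta I_2)^3}{D}A+(\delta I_2)^4\Big]. $$
   Context: $MS(2,\mathbb{R})$ denotes real symmetric $2\times 2$ matrices. The matrix $F$ is the paper's $5\times 5$ matrix $g'_{\tilde{\mathcal{X}}^J_2}(x,y,q,p,\kappa)$ associated with the $(q,p,\kappa)$ coordinates of the extended Siegel–Jacobi upper half space of degree $2$; here it is defined directly by the listed entries. *)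

theory Defs
  imports "HOL-Analysis.Analysis"
begin

definition Fmat :: "real \<Rightarrow> real \<Rightarrow> real \<Rightarrow> real \<Rightarrow> real \<Rightarrow> real \<Rightarrow> real \<Rightarrow> real
     \<Rightarrow> real \<Rightarrow> real \<Rightarrow> real \<Rightarrow> real \<Rightarrow> real^5^5" where
  "Fmat \<gamma> \<delta> x11 x12 x22 y11 y12 y22 q1 q2 p1 p2 =
    (let D = y11 * y22 - y12^2;
         c = \<gamma> / D;
         f11 = c * y22 + \<delta> * p1^2;
         f12 = - c * y12 + \<delta> * p1 * p2;
         f13 = c * (y22 * x11 - y12 * x12) - \<delta> * q1 * p1;
         f14 = c * (y22 * x12 - y12 * x22) - \<delta> * q1 * p2;
         f15 = - \<delta> * p1;
         f22 = c * y11 + \<delta> * p2^2;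
         f23 = c * (- y12 * x11 + y11 * x12) - \<delta> * q2 * p1;
         f24 = c * (- y12 * x12 + y11 * x22) - \<delta> * q2 * p2;
         f25 = - \<delta> * p2;
         f33 = c * ((x11^2 + y11^2) * y22 + (x12^2 - y12^2) * y11 - 2 * x11 * x12 * y12) + \<delta> * q1^2;
         f34 = c * ((- (x12^2) - x11 * x22 + y11 * y22 - y12^2) * y12 + x11 * x12 * y22 + x12 * x22 * y11)
               + \<delta> * q1 * q2;
         f35 = \<delta> * q1;
         f44 = c * ((x12^2 - y12^2) * y22 + (x22^2 + y22^2) * y11 - 2 * x12 * x22 * y12) + \<delta> * q2^2;
         f45 = \<delta> * q2;
         f55 = \<delta>
     in vector [vector [f11, f12, f13, f14, f15],
                vector [f12, f22, f23, f24, f25],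
                vector [f13, f23, f33, f34, f35],
                vector [f14, f24, f34, f44, f45],
                vector [f15, f25, f35, f45, f55]])"

end

theory Submission
  imports Defs
begin

lemma exhaust_5':
  fixes x :: 5
  shows "x = 1 \<or> x = 2 \<or> x = 3 \<or> x = 4 \<or> x = 5"
proof (induct x)
  case (of_int z)
  then have "z = 0 \<or> z = 1 \<or> z = 2 \<or> z = 3 \<or> z = 4" by fastforce
  then show ?case by auto
qed

lemma UNIV_5': "(UNIV :: 5 set) = {1,2,3,4,5}"
  using exhaust_5' by auto

lemma vector_5' [simp]:
 "(vector [x1,x2,x3,x4,x5] ::('a::zero)^5)$1 = x1"
 "(vector [x1,x2,x3,x4,x5] ::('a::zero)^5)$2 = x2"
 "(vector [x1,x2,x3,x4,x5] ::('a::zero)^5)$3 = x3"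
 "(vector [x1,x2,x3,x4,x5] ::('a::zero)^5)$4 = x4"
 "(vector [x1,x2,x3,x4,x5] ::('a::zero)^5)$5 = x5"
  unfolding vector_def by simp_all

lemma det_5_raw:
  "det (A::'a::comm_ring_1^5^5) = (\<Sum>b\<in>{1,2,3,4,5}. \<Sum>c\<in>{2,3,4,5}. \<Sum>d\<in>{3,4,5}. \<Sum>e\<in>{4,5}.
     of_int (sign (Transposition.transpose 1 b \<circ> (Transposition.transpose 2 c \<circ> (Transposition.transpose 3 d \<circ> (Transposition.transpose 4 e \<circ> id))))) *
     (\<Prod>i\<in>{1,2,3,4,5}. A $ i $ ((Transposition.transpose 1 b \<circ> (Transposition.transpose 2 c \<circ> (Transposition.transpose 3 d \<circ> (Transposition.transpose 4 e \<circ> id)))) i)))"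
proof -
  have f1: "finite {2::5,3,4,5}" "1 \<notin> {2::5,3,4,5}" by auto
  have f2: "finite {3::5,4,5}" "2 \<notin> {3::5,4,5}" by auto
  have f3: "finite {4::5,5}" "3 \<notin> {4::5,5}" by auto
  have f4: "finite {5::5}" "4 \<notin> {5::5}" by auto
  have f5: "{p. p permutes {5::5}} = {id}" by (simp add: permutes_sing)
  show ?thesis
    unfolding det_def UNIV_5'
    unfolding sum_over_permutations_insert[OF f1] sum_over_permutations_insert[OF f2]
      sum_over_permutations_insert[OF f3] sum_over_permutations_insert[OF f4] f5
    by simp
qed

lemma det_5_vec:
  "det (vector [vector [a11,a12,a13,a14,a15], vector [a21,a22,a23,a24,a25], vector [a31,a32,a33,a34,a35], vector [a41,a42,a43,a44,a45], vector [a51,a52,a53,a54,a55]] :: 'a::comm_ring_1^5^5) =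
   a11 * a22 * a33 * a44 * a55 - a11 * a22 * a33 * a45 * a54 - a11 * a22 * a34 * a43 * a55 + a11 * a22 * a34 * a45 * a53 + a11 * a22 * a35 * a43 * a54 - a11 * a22 * a35 * a44 * a53 - a11 * a23 * a32 * a44 * a55 + a11 * a23 * a32 * a45 * a54 + a11 * a23 * a34 * a42 * a55 - a11 * a23 * a34 * a45 * a52 - a11 * a23 * a35 * a42 * a54 + a11 * a23 * a35 * a44 * a52 + a11 * a24 * a32 * a43 * a55 - a11 * a24 * a32 * a45 * a53 - a11 * a24 * a33 * a42 * a55 + a11 * a24 * a33 * a45 * a52 + a11 * a24 * a35 * a42 * a53 - a11 * a24 * a35 * a43 * a52 - a11 * a25 * a32 * a43 * a54 + a11 * a25 * a32 * a44 * a53 + a11 * a25 * a33 * a42 * a54 - a11 * a25 * a33 * a44 * a52 - a11 * a25 * a34 * a42 * a53 + a11 * a25 * a34 * a43 * a52 - a12 * a21 * a33 * a44 * a55 + a12 * a21 * a33 * a45 * a54 + a12 * a21 * a34 * a43 * a55 - a12 * a21 * a34 * a45 * a53 - a12 * a21 * a35 * a43 * a54 + a12 * a21 * a35 * a44 * a53 + a12 * a23 * a31 * a44 * a55 - a12 * a23 * a31 * a45 * a54 - a12 * a23 * a34 * a41 * a55 + a12 * a23 * a34 * a45 * a51 + a12 * a23 * a35 * a41 * a54 - a12 * a23 * a35 * a44 * a51 - a12 * a24 * a31 * a43 * a55 + a12 * a24 * a31 * a45 * a53 + a12 * a24 * a33 * a41 * a55 - a12 * a24 * a33 * a45 * a51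 - a12 * a24 * a35 * a41 * a53 + a12 * a24 * a35 * a43 * a51 + a12 * a25 * a31 * a43 * a54 - a12 * a25 * a31 * a44 * a53 - a12 * a25 * a33 * a41 * a54 + a12 * a25 * a33 * a44 * a51 + a12 * a25 * a34 * a41 * a53 - a12 * a25 * a34 * a43 * a51 + a13 * a21 * a32 * a44 * a55 - a13 * a21 * a32 * a45 * a54 - a13 * a21 * a34 * a42 * a55 + a13 * a21 * a34 * a45 * a52 + a13 * a21 * a35 * a42 * a54 - a13 * a21 * a35 * a44 * a52 - a13 * a22 * a31 * a44 * a55 + a13 * a22 * a31 * a45 * a54 + a13 * a22 * a34 * a41 * a55 - a13 * a22 * a34 * a45 * a51 - a13 * a22 * a35 * a41 * a54 + a13 * a22 * a35 * a44 * a51 + a13 * a24 * a31 * a42 * a55 - a13 * a24 * a31 * a45 * a52 - a13 * a24 * a32 * a41 * a55 + a13 * a24 * a32 * a45 * a51 + a13 * a24 * a35 * a41 * a52 - a13 * a24 * a35 * a42 * a51 - a13 * a25 * a31 * a42 * a54 + a13 * a25 * a31 * a44 * a52 + a13 * a25 * a32 * a41 * a54 - a13 * a25 * a32 * a44 * a51 - a13 * a25 * a34 * a41 * a52 + a13 * a25 * a34 * a42 * a51 - a14 * a21 * a32 * a43 * a55 + a14 * a21 * a32 * a45 * a53 + a14 * a21 * a33 * a42 * a55 - a14 * a21 * a33 * a45 * a52 - a14 * a21 * a35 * a42 * a53 + a14 * a21 * a35 * a43 * a52 + a14 * a22 * a31 * a43 * a55 - a14 * a22 * a31 * a45 * a53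 - a14 * a22 * a33 * a41 * a55 + a14 * a22 * a33 * a45 * a51 + a14 * a22 * a35 * a41 * a53 - a14 * a22 * a35 * a43 * a51 - a14 * a23 * a31 * a42 * a55 + a14 * a23 * a31 * a45 * a52 + a14 * a23 * a32 * a41 * a55 - a14 * a23 * a32 * a45 * a51 - a14 * a23 * a35 * a41 * a52 + a14 * a23 * a35 * a42 * a51 + a14 * a25 * a31 * a42 * a53 - a14 * a25 * a31 * a43 * a52 - a14 * a25 * a32 * a41 * a53 + a14 * a25 * a32 * a43 * a51 + a14 * a25 * a33 * a41 * a52 - a14 * a25 * a33 * a42 * a51 + a15 * a21 * a32 * a43 * a54 - a15 * a21 * a32 * a44 * a53 - a15 * a21 * a33 * a42 * a54 + a15 * a21 * a33 * a44 * a52 + a15 * a21 * a34 * a42 * a53 - a15 * a21 * a34 * a43 * a52 - a15 * a22 * a31 * a43 * a54 + a15 * a22 * a31 * a44 * a53 + a15 * a22 * a33 * a41 * a54 - a15 * a22 * a33 * a44 * a51 - a15 * a22 * a34 * a41 * a53 + a15 * a22 * a34 * a43 * a51 + a15 * a23 * a31 * a42 * a54 - a15 * a23 * a31 * a44 * a52 - a15 * a23 * a32 * a41 * a54 + a15 * a23 * a32 * a44 * a51 + a15 * a23 * a34 * a41 * a52 - a15 * a23 * a34 * a42 * a51 - a15 * a24 * a31 * a42 * a53 + a15 * a24 * a31 * a43 * a52 + a15 * a24 * a32 * a41 * a53 - a15 * a24 * a32 * a43 * a51 - a15 * a24 * a33 * a41 * a52 + a15 * a24 * a33 * a42 * a5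1"
  unfolding det_5_raw
  by (simp add: sign_swap_id permutation_swap_id sign_compose sign_id swap_id_eq permutation_compose algebra_simps)

lemma step1:
  fixes f11 f12 f13 f14 f15 f22 f23 f24 f25 f33 f34 f35 f44 f45 f55 g11 g12 g13 g14 g22 g23 g24 g33 g34 g44
    m11 m12 m13 m14 m22 m23 m24 m33 m34 m44 d t u1 u2 u3 u4 :: real
  assumes "f11 = g11 + d*u1*u1"
    and "f12 = g12 + d*u1*u2"
    and "f13 = g13 + d*u1*u3"
    and "f14 = g14 + d*u1*u4 - t"
    and "f15 = d*u1"
    and "f22 = g22 + d*u2*u2"
    and "f23 = g23 + d*u2*u3 + t"
    and "f24 = g24 + d*u2*u4"
    and "f25 = d*u2"
    and "f33 = g33 + d*u3*u3"
    and "f34 = g34 + d*u3*u4"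
    and "f35 = d*u3"
    and "f44 = g44 + d*u4*u4"
    and "f45 = d*u4"
    and "f55 = d"
    and "m11 = g11"
    and "m12 = g12"
    and "m13 = g13"
    and "m14 = g14 - t"
    and "m22 = g22"
    and "m23 = g23 + t"
    and "m24 = g24"
    and "m33 = g33"
    and "m34 = g34"
    and "m44 = g44"
  shows "f11 * f22 * f33 * f44 * f55 - f11 * f22 * f33 * f45 * f45 - f11 * f22 * f34 * f34 * f55 + f11 * f22 * f34 * f45 * f35 + f11 * f22 * f35 * f34 * f45 - f11 * f22 * f35 * f44 * f35 - f11 * f23 * f23 * f44 * f55 + f11 * f23 * f23 * f45 * f45 + f11 * f23 * f34 * f24 * f55 - f11 * f23 * f34 * f45 * f25 - f11 * f23 * f35 * f24 * f45 + f11 * f23 * f35 * f44 * f25 + f11 * f24 * f23 * f34 * f55 - f11 * f24 * f23 * f45 * f35 - f11 * f24 * f33 * f24 * f55 + f11 * f24 * f33 * f45 * f25 + f11 * f24 * f35 * f24 * f35 - f11 * f24 * f35 * f34 * f25 - f11 * f25 * f23 * f34 * f45 + f11 * f25 * f23 * f44 * f35 + f11 * f25 * f33 * f24 * f45 - f11 * f25 * f33 * f44 * f25 - f11 * f25 * f34 * f24 * f35 + f11 * f25 * f34 * f34 * f25 - f12 * f12 * f33 * f44 * f55 + f12 * f12 * f33 * f45 * f45 + f12 * f12 * f34 * f34 * f55 - f12 * f12 * f34 * f45 * f35 - f12 * f12 * f35 * f34 * f45 + f12 * f12 * f35 * f44 * f35 + f12 * f23 * f13 * f44 * f55 - f12 *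 f23 * f13 * f45 * f45 - f12 * f23 * f34 * f14 * f55 + f12 * f23 * f34 * f45 * f15 + f12 * f23 * f35 * f14 * f45 - f12 * f23 * f35 * f44 * f15 - f12 * f24 * f13 * f34 * f55 + f12 * f24 * f13 * f45 * f35 + f12 * f24 * f33 * f14 * f55 - f12 * f24 * f33 * f45 * f15 - f12 * f24 * f35 * f14 * f35 + f12 * f24 * f35 * f34 * f15 + f12 * f25 * f13 * f34 * f45 - f12 * f25 * f13 * f44 * f35 - f12 * f25 * f33 * f14 * f45 + f12 * f25 * f33 * f44 * f15 + f12 * f25 * f34 * f14 * f35 - f12 * f25 * f34 * f34 * f15 + f13 * f12 * f23 * f44 * f55 - f13 * f12 * f23 * f45 * f45 - f13 * f12 * f34 * f24 * f55 + f13 * f12 * f34 * f45 * f25 + f13 * f12 * f35 * f24 * f45 - f13 * f12 * f35 * f44 * f25 - f13 * f22 * f13 * f44 * f55 + f13 * f22 * f13 * f45 * f45 + f13 * f22 * f34 * f14 * f55 - f13 * f22 * f34 * f45 * f15 - f13 * f22 * f35 * f14 * f45 + f13 * f22 * f35 * f44 * f15 + f13 * f24 * f13 * f24 * f55 - f13 * f24 * f13 * f45 * f25 - f13 * f24 * f23 * f14 * f55 + f13 * f24 * f23 * f45 * f15 + f13 * f24 * f35 * f14 * f25 - f13 * f24 * f35 * f24 * f15 - f13 * f25 * f13 * f24 * f45 + f13 * f25 * f13 * f44 * f25 + f13 * f25 * f23 * f14 * f45 - f13 * f25 * f23 * f44 * f15 - f13 * f25 * f34 * f14 * f25 + f13 *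 f25 * f34 * f24 * f15 - f14 * f12 * f23 * f34 * f55 + f14 * f12 * f23 * f45 * f35 + f14 * f12 * f33 * f24 * f55 - f14 * f12 * f33 * f45 * f25 - f14 * f12 * f35 * f24 * f35 + f14 * f12 * f35 * f34 * f25 + f14 * f22 * f13 * f34 * f55 - f14 * f22 * f13 * f45 * f35 - f14 * f22 * f33 * f14 * f55 + f14 * f22 * f33 * f45 * f15 + f14 * f22 * f35 * f14 * f35 - f14 * f22 * f35 * f34 * f15 - f14 * f23 * f13 * f24 * f55 + f14 * f23 * f13 * f45 * f25 + f14 * f23 * f23 * f14 * f55 - f14 * f23 * f23 * f45 * f15 - f14 * f23 * f35 * f14 * f25 + f14 * f23 * f35 * f24 * f15 + f14 * f25 * f13 * f24 * f35 - f14 * f25 * f13 * f34 * f25 - f14 * f25 * f23 * f14 * f35 + f14 * f25 * f23 * f34 * f15 + f14 * f25 * f33 * f14 * f25 - f14 * f25 * f33 * f24 * f15 + f15 * f12 * f23 * f34 * f45 - f15 * f12 * f23 * f44 * f35 - f15 * f12 * f33 * f24 * f45 + f15 * f12 * f33 * f44 * f25 + f15 * f12 * f34 * f24 * f35 - f15 * f12 * f34 * f34 * f25 - f15 * f22 * f13 * f34 * f45 + f15 * f22 * f13 * f44 * f35 + f15 * f22 * f33 * f14 * f45 - f15 * f22 * f33 * f44 * f15 - f15 * f22 * f34 * f14 * f35 + f15 * f22 * f34 * f34 * f15 + f15 * f23 * f13 * f24 * f45 - f15 * f23 * f13 * f44 * f25 - f15 * f23 * f23 * f14 * f45 + f15 *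 f23 * f23 * f44 * f15 + f15 * f23 * f34 * f14 * f25 - f15 * f23 * f34 * f24 * f15 - f15 * f24 * f13 * f24 * f35 + f15 * f24 * f13 * f34 * f25 + f15 * f24 * f23 * f14 * f35 - f15 * f24 * f23 * f34 * f15 - f15 * f24 * f33 * f14 * f25 + f15 * f24 * f33 * f24 * f15 = d * (m11 * m22 * m33 * m44 - m11 * m22 * m34 * m34 - m11 * m23 * m23 * m44 + m11 * m23 * m34 * m24 + m11 * m24 * m23 * m34 - m11 * m24 * m33 * m24 - m12 * m12 * m33 * m44 + m12 * m12 * m34 * m34 + m12 * m23 * m13 * m44 - m12 * m23 * m34 * m14 - m12 * m24 * m13 * m34 + m12 * m24 * m33 * m14 + m13 * m12 * m23 * m44 - m13 * m12 * m34 * m24 - m13 * m22 * m13 * m44 + m13 * m22 * m34 * m14 + m13 * m24 * m13 * m24 - m13 * m24 * m23 * m14 - m14 * m12 * m23 * m34 + m14 * m12 * m33 * m24 + m14 * m22 * m13 * m34 - m14 * m22 * m33 * m14 - m14 * m23 * m13 * m24 + m14 * m23 * m23 * m14)"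
  unfolding assms by algebra

lemma step2:
  fixes m11 m12 m13 m14 m22 m23 m24 m33 m34 m44 c t x11 x12 x22 y11 y12 y22 :: real
  assumes "m11 = c*y22"
    and "m12 = - c*y12"
    and "m13 = c*(y22*x11 - y12*x12)"
    and "m14 = c*(y22*x12 - y12*x22) - t"
    and "m22 = c*y11"
    and "m23 = c*(- y12*x11 + y11*x12) + t"
    and "m24 = c*(- y12*x12 + y11*x22)"
    and "m33 = c*((x11^2 + y11^2)*y22 + (x12^2 - y12^2)*y11 - 2*x11*x12*y12)"
    and "m34 = c*((- (x12^2) - x11*x22 + y11*y22 - y12^2)*y12 + x11*x12*y22 + x12*x22*y11)"
    and "m44 = c*((x12^2 - y12^2)*y22 + (x22^2 + y22^2)*y11 - 2*x12*x22*y12)"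
  shows "m11 * m22 * m33 * m44 - m11 * m22 * m34 * m34 - m11 * m23 * m23 * m44 + m11 * m23 * m34 * m24 + m11 * m24 * m23 * m34 - m11 * m24 * m33 * m24 - m12 * m12 * m33 * m44 + m12 * m12 * m34 * m34 + m12 * m23 * m13 * m44 - m12 * m23 * m34 * m14 - m12 * m24 * m13 * m34 + m12 * m24 * m33 * m14 + m13 * m12 * m23 * m44 - m13 * m12 * m34 * m24 - m13 * m22 * m13 * m44 + m13 * m22 * m34 * m14 + m13 * m24 * m13 * m24 - m13 * m24 * m23 * m14 - m14 * m12 * m23 * m34 + m14 * m12 * m33 * m24 + m14 * m22 * m13 * m34 - m14 * m22 * m33 * m14 - m14 * m23 * m13 * m24 + m14 * m23 * m23 * m14 = c^4 * (y11 * y22 - y12^2)^4 - c^3 * (y11 * y22 - y12^2)^2 * t * (2 * ((x11 - x22) * y12 - x12 * (y11 - y22)))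
     - c^2 * (y11 * y22 - y12^2) * t^2 * (4 * x12^2 + (x11 - x22)^2 + y11^2 + y22^2 + 2 * y12^2)
     - c * t^3 * (2 * ((x11 - x22) * y12 - x12 * (y11 - y22))) + t^4"
  unfolding assms by algebra


lemma combined:
  fixes f11 f12 f13 f14 f15 f22 f23 f24 f25 f33 f34 f35 f44 f45 f55 g11 g12 g13 g14 g22 g23 g24 g33 g34 g44
    d t ua ub uc ud c x11 x12 x22 y11 y12 y22 :: real
  assumes "f11 = g11 + d*ua*ua" "f12 = g12 + d*ua*ub" "f13 = g13 + d*ua*uc" "f14 = g14 + d*ua*ud - t" "f15 = d*ua"
    "f22 = g22 + d*ub*ub" "f23 = g23 + d*ub*uc + t" "f24 = g24 + d*ub*ud" "f25 = d*ub"
    "f33 = g33 + d*uc*uc" "f34 = g34 + d*uc*ud" "f35 = d*uc" "f44 = g44 + d*ud*ud" "f45 = d*ud" "f55 = d"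
    and "g11 = c*y22" "g12 = - c*y12" "g13 = c*(y22*x11 - y12*x12)" "g14 = c*(y22*x12 - y12*x22)"
    "g22 = c*y11" "g23 = c*(- y12*x11 + y11*x12)" "g24 = c*(- y12*x12 + y11*x22)"
    "g33 = c*((x11^2 + y11^2)*y22 + (x12^2 - y12^2)*y11 - 2*x11*x12*y12)"
    "g34 = c*((- (x12^2) - x11*x22 + y11*y22 - y12^2)*y12 + x11*x12*y22 + x12*x22*y11)"
    "g44 = c*((x12^2 - y12^2)*y22 + (x22^2 + y22^2)*y11 - 2*x12*x22*y12)"
  shows "det (vector [vector [f11,f12,f13,f14,f15], vector [f12,f22,f23,f24,f25], vector [f13,f23,f33,f34,f35], vector [f14,f24,f34,f44,f45], vector [f15,f25,f35,f45,f55]] :: real^5^5) = d * (c^4 * (y11 * y22 - y12^2)^4 - c^3 * (y11 * y22 - y12^2)^2 * t * (2 * ((x11 - x22) * y12 - x12 * (y11 - y22)))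
     - c^2 * (y11 * y22 - y12^2) * t^2 * (4 * x12^2 + (x11 - x22)^2 + y11^2 + y22^2 + 2 * y12^2)
     - c * t^3 * (2 * ((x11 - x22) * y12 - x12 * (y11 - y22))) + t^4)"
proof -
  have "det (vector [vector [f11,f12,f13,f14,f15], vector [f12,f22,f23,f24,f25], vector [f13,f23,f33,f34,f35], vector [f14,f24,f34,f44,f45], vector [f15,f25,f35,f45,f55]] :: real^5^5) = d * (g11 * g22 * g33 * g44 - g11 * g22 * g34 * g34 - g11 * (g23 + t) * (g23 + t) * g44 + g11 * (g23 + t) * g34 * g24 + g11 * g24 * (g23 + t) * g34 - g11 * g24 * g33 * g24 - g12 * g12 * g33 * g44 + g12 * g12 * g34 * g34 + g12 * (g23 + t) * g13 * g44 - g12 * (g23 + t) * g34 * (g14 - t) - g12 * g24 * g13 * g34 + g12 * g24 * g33 * (g14 - t) + g13 * g12 * (g23 + t) * g44 - g13 * g12 * g34 * g24 - g13 * g22 * g13 * g44 + g13 * g22 * g34 * (g14 - t) + g13 * g24 * g13 * g24 - g13 * g24 * (g23 + t) * (g14 - t) - (g14 - t) * g12 * (g23 + t) * g34 + (g14 - t) * g12 * g33 * g24 + (g14 - t) * g22 * g13 * g34 - (g14 - t) * g22 * g33 * (g14 - t) - (g14 - t) * (g23 + t) * g13 * g24 + (g14 - t) * (g23 + t) * (g23 + t) * (g14 - t))"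
    unfolding det_5_vec by (rule step1[OF assms(1-15) refl refl refl refl refl refl refl refl refl refl])
  also have "(g11 * g22 * g33 * g44 - g11 * g22 * g34 * g34 - g11 * (g23 + t) * (g23 + t) * g44 + g11 * (g23 + t) * g34 * g24 + g11 * g24 * (g23 + t) * g34 - g11 * g24 * g33 * g24 - g12 * g12 * g33 * g44 + g12 * g12 * g34 * g34 + g12 * (g23 + t) * g13 * g44 - g12 * (g23 + t) * g34 * (g14 - t) - g12 * g24 * g13 * g34 + g12 * g24 * g33 * (g14 - t) + g13 * g12 * (g23 + t) * g44 - g13 * g12 * g34 * g24 - g13 * g22 * g13 * g44 + g13 * g22 * g34 * (g14 - t) + g13 * g24 * g13 * g24 - g13 * g24 * (g23 + t) * (g14 - t) - (g14 - t) * g12 * (g23 + t) * g34 + (g14 - t) * g12 * g33 * g24 + (g14 - t) * g22 * g13 * g34 - (g14 - t) * g22 * g33 * (g14 - t) - (g14 - t) * (g23 + t) * g13 * g24 + (g14 - t) * (g23 + t) * (g23 + t) * (g14 - t)) = c^4 * (y11 * y22 - y12^2)^4 - c^3 * (y11 * y22 - y12^2)^2 * t * (2 * ((x11 - x22) * y12 - x12 * (y11 - y22)))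
     - c^2 * (y11 * y22 - y12^2) * t^2 * (4 * x12^2 + (x11 - x22)^2 + y11^2 + y22^2 + 2 * y12^2)
     - c * t^3 * (2 * ((x11 - x22) * y12 - x12 * (y11 - y22))) + t^4"
    by (rule step2) (simp_all add: assms(16-25))
  finally show ?thesis .
qed

theorem mainTheorem3:
  fixes \<gamma> \<delta> x11 x12 x22 y11 y12 y22 q1 q2 p1 p2 :: real
  assumes "\<gamma> > 0" and "\<delta> > 0"
    and "y11 > 0" and "y11 * y22 - y12^2 > 0"
  shows "let D = y11 * y22 - y12^2;
             I2 = p2 * q1 - p1 * q2;
             A = 2 * ((x11 - x22) * y12 - x12 * (y11 - y22));
             B = 4 * x12^2 + (x11 - x22)^2 + y11^2 + y22^2 + 2 * y12^2
         in det (Fmat \<gamma> \<delta> x11 x12 x22 y11 y12 y22 q1 q2 p1 p2) =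
            \<delta> * (\<gamma>^4 - \<gamma>^3 * (\<delta> * I2) / D * A - \<gamma>^2 * (\<delta> * I2)^2 / D * B
                 - \<gamma> * (\<delta> * I2)^3 / D * A + (\<delta> * I2)^4)"
proof -
  define D where "D = y11 * y22 - y12^2"
  define c where "c = \<gamma> / D"
  define t where "t = \<delta> * (p2 * q1 - p1 * q2)"
  have D0: "D > 0" using assms(4) by (simp add: D_def)
  have hdet: "det (Fmat \<gamma> \<delta> x11 x12 x22 y11 y12 y22 q1 q2 p1 p2) = \<delta> * (c^4 * (y11 * y22 - y12^2)^4 - c^3 * (y11 * y22 - y12^2)^2 * t * (2 * ((x11 - x22) * y12 - x12 * (y11 - y22)))
     - c^2 * (y11 * y22 - y12^2) * t^2 * (4 * x12^2 + (x11 - x22)^2 + y11^2 + y22^2 + 2 * y12^2)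
     - c * t^3 * (2 * ((x11 - x22) * y12 - x12 * (y11 - y22))) + t^4)"
    unfolding Fmat_def Let_def
    apply (rule combined[where d = \<delta> and t = t and ua = "- p1" and ub = "- p2" and uc = q1 and ud = q2 and c = c
    and ?g11.0 = "c*y22" and ?g12.0 = "- c*y12" and ?g13.0 = "c*(y22*x11 - y12*x12)" and ?g14.0 = "c*(y22*x12 - y12*x22)"
    and ?g22.0 = "c*y11" and ?g23.0 = "c*(- y12*x11 + y11*x12)" and ?g24.0 = "c*(- y12*x12 + y11*x22)"
    and ?g33.0 = "c*((x11^2 + y11^2)*y22 + (x12^2 - y12^2)*y11 - 2*x11*x12*y12)"
    and ?g34.0 = "c*((- (x12^2) - x11*x22 + y11*y22 - y12^2)*y12 + x11*x12*y22 + x12*x22*y11)"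
    and ?g44.0 = "c*((x12^2 - y12^2)*y22 + (x22^2 + y22^2)*y11 - 2*x12*x22*y12)"])
    apply (simp_all add: t_def c_def D_def algebra_simps power2_eq_square)
    done
  have gam: "\<gamma> = c * D" using D0 by (simp add: c_def)
  show ?thesis
    unfolding Let_def hdet D_def[symmetric] t_def[symmetric]
    using D0 by (simp add: gam field_simps power2_eq_square power3_eq_cube power4_eq_xxxx)
qed

end
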